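(* Let $R$ be an associative ring with identity and $a,b,c,d\in R$ such that both $a^{\|(b,c)}$ and $d^{\|(b,c)}$ exist. Let $b^{-}$, $c^{-}$ be any (fixed) inner inverses of $b$, $c$, and put $e=bb^{-}$, $f=c^{-}c$. Then $a^{\|(b,c)}de+1-e$ and $fda^{\|(b,c)}+1-f$ are invertible and $(a^{\|(b,c)}de+1-e)^{-1}=d^{\|(b,c)}ae+1-e$ and $(fda^{\|(b,c)}+1-f)^{-1}=fad^{\|(b,c)}+1-f$.
   Context: For $a,b,c\in R$, $a$ is $(b,c)$-invertible if there exists $y\in R$ with $y\in (bRy)\cap(yRc)$, $yab=b$ and $cay=c$; such $y$ is unique and denoted $a^{\|(b,c)}$. An inner inverse of $x$ is an element $x^{-}$ with $xx^{-}x=x$. *)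

theory Defs
  imports Main
begin

definition bc_inverse :: "'a::ring_1 \<Rightarrow> 'a \<Rightarrow> 'a \<Rightarrow> 'a \<Rightarrow> bool" where
  "bc_inverse a b c y \<longleftrightarrow>
     (\<exists>r. y = b * r * y) \<and> (\<exists>s. y = y * s * c) \<and> y * a * b = b \<and> c * a * y = c"

definition bc_invertible :: "'a::ring_1 \<Rightarrow> 'a \<Rightarrow> 'a \<Rightarrow> bool" where
  "bc_invertible a b c \<longleftrightarrow> (\<exists>y. bc_inverse a b c y)"

text \<open>The (b,c)-inverse a^{||(b,c)} (unique when it exists).\<close>
definition bc_inv :: "'a::ring_1 \<Rightarrow> 'a \<Rightarrow> 'a \<Rightarrow> 'a" where
  "bc_inv a b c = (THE y. bc_inverse a b c y)"

definition ring_invertible :: "'a::ring_1 \<Rightarrow> bool" where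
  "ring_invertible x \<longleftrightarrow> (\<exists>z. x * z = 1 \<and> z * x = 1)"

definition ring_inverse :: "'a::ring_1 \<Rightarrow> 'a" where
  "ring_inverse x = (THE z. x * z = 1 \<and> z * x = 1)"

end

theory Submission
  imports Defs
begin

lemma bc_unique:
  fixes a b c y1 y2 :: "'a::ring_1"
  assumes "bc_inverse a b c y1" "bc_inverse a b c y2"
  shows "y1 = y2"
proof -
  obtain r where r: "y1 = b * r * y1" using assms(1) unfolding bc_inverse_def by blast
  obtain s where s: "y2 = y2 * s * c" using assms(2) unfolding bc_inverse_def by blast
  have h1: "y2 * a * b = b" "c * a * y1 = c" using assms unfolding bc_inverse_def by auto
  have "y1 = y2 * a * b * r * y1" using r h1 by (simp add: mult.assoc)
  also have "\<dots> = y2 * a * y1" using r by (simp add: mult.assoc)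
  finally have A: "y1 = y2 * a * y1" .
  have "y2 = y2 * s * (c * a * y1)" using s h1 by simp
  also have "\<dots> = y2 * a * y1" using s by (metis mult.assoc)
  finally show ?thesis using A by simp
qed

lemma bc_inv_prop:
  assumes "bc_invertible a b c"
  shows "bc_inverse a b c (bc_inv a b c)"
proof -
  obtain y where y: "bc_inverse a b c y" using assms unfolding bc_invertible_def by blast
  show ?thesis unfolding bc_inv_def
    by (rule theI[of _ y]) (use y bc_unique in blast)+
qed

lemma ring_inv_eq:
  fixes x z :: "'a::ring_1"
  assumes "x * z = 1" "z * x = 1"
  shows "ring_invertible x \<and> ring_inverse x = z"
proof -
  have u: "\<And>w. x * w = 1 \<and> w * x = 1 \<Longrightarrow> w = z"
  proof -
    fix w assume "x * w = 1 \<and> w * x = 1"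
    then have "w = (z * x) * w" using assms(2) by simp
    also have "\<dots> = z" using \<open>x * w = 1 \<and> w * x = 1\<close> by (simp add: mult.assoc)
    finally show "w = z" .
  qed
  show ?thesis unfolding ring_invertible_def ring_inverse_def
    using assms u by (metis (mono_tags, lifting) the_equality)
qed

theorem mainTheorem10:
  fixes a b c d b' c' :: "'a::ring_1"
  assumes "bc_invertible a b c" and "bc_invertible d b c"
    and "b * b' * b = b" and "c * c' * c = c"
  defines "e \<equiv> b * b'" and "f \<equiv> c' * c"
  shows "ring_invertible (bc_inv a b c * d * e + 1 - e)
       \<and> ring_invertible (f * d * bc_inv a b c + 1 - f)
       \<and> ring_inverse (bc_inv a b c * d * e + 1 - e) = bc_inv d b c * a * e + 1 - e
       \<and> ring_inverse (f * d * bc_inv a b c + 1 - f) = f * a * bc_inv d b c + 1 - f"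
proof -
  define y where "y = bc_inv a b c"
  define z where "z = bc_inv d b c"
  have Y: "bc_inverse a b c y" using bc_inv_prop[OF assms(1)] y_def by simp
  have Z: "bc_inverse d b c z" using bc_inv_prop[OF assms(2)] z_def by simp
  obtain r1 s1 where y1: "y = b * r1 * y" "y = y * s1 * c" "y * a * b = b" "c * a * y = c"
    using Y unfolding bc_inverse_def by blast
  obtain r2 s2 where z1: "z = b * r2 * z" "z = z * s2 * c" "z * d * b = b" "c * d * z = c"
    using Z unfolding bc_inverse_def by blast
  have ee: "e * e = e" unfolding e_def using assms(3) by (metis mult.assoc)
  have ff: "f * f = f" unfolding f_def using assms(4) by (metis mult.assoc)
  have ey: "e * y = y" unfolding e_def using assms(3) y1(1) by (metis mult.assoc)
  have ez: "e * z = z" unfolding e_def using assms(3) z1(1) by (metis mult.assoc)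
  have yf: "y * f = y" unfolding f_def using assms(4) y1(2) by (metis mult.assoc)
  have zf: "z * f = z" unfolding f_def using assms(4) z1(2) by (metis mult.assoc)
  have ydz: "y * d * z = y" using y1(2) z1(4) by (metis mult.assoc)
  have zay: "z * a * y = z" using z1(2) y1(4) by (metis mult.assoc)
  have yaz: "y * a * z = z" using z1(1) y1(3) by (metis mult.assoc)
  have zdy: "z * d * y = y" using y1(1) z1(3) by (metis mult.assoc)
  have yae: "y * a * e = e" unfolding e_def using y1(3) by (metis mult.assoc)
  have zde: "z * d * e = e" unfolding e_def using z1(3) by (metis mult.assoc)
  have fdz: "f * d * z = f" unfolding f_def using z1(4) by (metis mult.assoc)
  have fay: "f * a * y = f" unfolding f_def using y1(4) by (metis mult.assoc)
  have P1: "(y * d * e + 1 - e) * (z * a * e + 1 - e) = 1"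
  proof -
    have "(y * d * e + 1 - e) * (z * a * e + 1 - e)
        = y * d * (e * z) * a * e + y * d * (e - e * e) + (z * a * e - (e * z) * a * e) + (1 - e - e + e * e)"
      by (simp add: algebra_simps)
    also have "\<dots> = 1" using ee ez ydz yae by (simp add: mult.assoc)
    finally show ?thesis .
  qed
  have P2: "(z * a * e + 1 - e) * (y * d * e + 1 - e) = 1"
  proof -
    have "(z * a * e + 1 - e) * (y * d * e + 1 - e)
        = z * a * (e * y) * d * e + z * a * (e - e * e) + (y * d * e - (e * y) * d * e) + (1 - e - e + e * e)"
      by (simp add: algebra_simps)
    also have "\<dots> = 1" using ee ey zay zde by (simp add: mult.assoc)
    finally show ?thesis .
  qed
  have P3: "(f * d * y + 1 - f) * (f * a * z + 1 - f) = 1"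
  proof -
    have "(f * d * y + 1 - f) * (f * a * z + 1 - f)
        = f * d * (y * f) * a * z + f * d * (y - y * f) + (f * a * z - f * f * a * z) + (1 - f - f + f * f)"
      by (simp add: algebra_simps)
    also have "\<dots> = 1" using ff yf yaz fdz by (simp add: mult.assoc)
    finally show ?thesis .
  qed
  have P4: "(f * a * z + 1 - f) * (f * d * y + 1 - f) = 1"
  proof -
    have "(f * a * z + 1 - f) * (f * d * y + 1 - f)
        = f * a * (z * f) * d * y + f * a * (z - z * f) + (f * d * y - f * f * d * y) + (1 - f - f + f * f)"
      by (simp add: algebra_simps)
    also have "\<dots> = 1" using ff zf zdy fay by (simp add: mult.assoc)
    finally show ?thesis .
  qed
  show ?thesis using ring_inv_eq[OF P1 P2] ring_inv_eq[OF P3 P4] y_def z_def by simp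
qed

end
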